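(* Consider the energy-efficiency maximization problem (P1) described in the context. The maximum of the system energy efficiency $\eta_{EE}$ over the feasible set of (P1) can always be obtained when each wireless device performs local computation during the whole time block, i.e., with execution times $\tau_k^* = T$ for all $k\in\{1,\dots,K\}$.
   Context: System: one power beacon (PB) with transmit power $P_0\ge 0$, one MEC server, a reconfigurable intelligent surface (RIS) with $N$ elements, and $K$ wireless devices (WDs), all nodes single-antenna. Given channels $g_{\mathrm{PU},k}\in\mathbb{C}$, $\mathbf{g}_{\mathrm{PI}},\mathbf{g}_{\mathrm{IU},k}\in\mathbb{C}^{N}$, $h_{\mathrm{UM},k}\in\mathbb{C}$, $\mathbf{h}_{\mathrm{UI},k},\mathbf{h}_{\mathrm{IM}}\in\mathbb{C}^{N}$. For phases $\boldsymbol\theta=(\theta_1,\dots,\theta_N)$ let $\boldsymbol\Theta=\mathrm{diag}(e^{j\theta_1},\dots,e^{j\theta_N})$ and $g_k=g_{\mathrm{PU},k}+\mathbf{g}_{\mathrm{PI}}^H\boldsymbol\Theta\mathbf{g}_{\mathrm{IU},k}$, $h_k=h_{\mathrm{UM},k}+\mathbf{h}_{\mathrm{UI},k}^H\boldsymbol\Theta\mathbf{h}_{\mathrm{IM}}$. Optimization variables: backscatter times $t^b_k\ge0$, active-transmission times $t^o_k\ge0$, backscattering coefficients $\rho_k\in[0,1]$, PB power $P_0\le P_{\max}$, WD transmit powers $p_k\ge0$, execution times $0\le\tau_k\le T$, CPU frequencies $0\le f_k\le f_{\max}$, and phases $\theta_n$ (unit-modulus reflection). Positive constants: $T,\sigma^2,\zeta,C_{\mathrm{cpu}},\epsilon_k,\delta,P_{c,k},p_{c,k},a_k,b_k,c_k$,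 $Q_k\ge0$, $\gamma_{\min,k}$. Throughputs: $\Gamma^b_k=t^b_k\log_2\!\big(1+\zeta\rho_kP_0|h_k|^2|g_k|^2/\sigma^2\big)$, $\Gamma^o_k=t^o_k\log_2\!\big(1+p_k|h_k|^2/\sigma^2\big)$, $\Gamma_k=\tau_kf_k/C_{\mathrm{cpu}}$, $R_{\mathrm{sum}}=\sum_{k=1}^K(\Gamma^b_k+\Gamma^o_k+\Gamma_k)$. Energies: $E_{1,k}=P_{c,k}t^b_k$, $E_{2,k}=\frac{p_k}{\delta}t^o_k+p_{c,k}t^o_k+\epsilon_kf_k^3\tau_k$, $E_{\mathrm{total}}=\sum_k(E_{1,k}+E_{2,k})$. Harvested energy: $E^b_k=\Big(\frac{a_k(1-\rho_k)P_0|g_k|^2+b_k}{(1-\rho_k)P_0|g_k|^2+c_k}-\frac{b_k}{c_k}\Big)t^b_k$, $P^b_k=\frac{a_kP_0|g_k|^2+b_k}{P_0|g_k|^2+c_k}-\frac{b_k}{c_k}$, $E^t_k=E^b_k+\sum_{i\ne k}P^b_kt^b_i$. Problem (P1): maximize $\eta_{EE}=R_{\mathrm{sum}}/E_{\mathrm{total}}$ over all the variables subject to: $\Gamma^b_k+\Gamma^o_k+\Gamma_k\ge\gamma_{\min,k}$ for all $k$; $E_{1,k}+E_{2,k}\le E^t_k+Q_k$ for all $k$; $\sum_{k=1}^K(t^b_k+t^o_k)\le T$ and $0\le\tau_k\le T$; $0\le f_k\le f_{\max}$; $0\le\rho_k\le1$; $P_0\le P_{\max}$; $|e^{j\theta_n}|=1$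 for all $n$; $p_k,t^b_k,t^o_k\ge0$. *)

theory Defs
  imports Complex_Main
begin

text \<open>Devices are indexed by
  k \<in> {1..K}, RIS elements by n \<in> {1..N}.  A vector in C^N is a function nat \<Rightarrow> complex
  whose entries at n \<in> {1..N} are used.\<close>

record sysparams =
  sp_K :: nat
  sp_N :: nat
  sp_T :: real
  sp_sigma2 :: real
  sp_zeta :: real
  sp_Ccpu :: real
  sp_eps :: "nat \<Rightarrow> real"
  sp_delta :: real
  sp_Pc :: "nat \<Rightarrow> real"
  sp_pc :: "nat \<Rightarrow> real"
  sp_a :: "nat \<Rightarrow> real"
  sp_b :: "nat \<Rightarrow> real"
  sp_c :: "nat \<Rightarrow> real"
  sp_Q :: "nat \<Rightarrow> real"
  sp_gmin :: "nat \<Rightarrow> real"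
  sp_Pmax :: real
  sp_fmax :: real
  sp_gPU :: "nat \<Rightarrow> complex"
  sp_gPI :: "nat \<Rightarrow> complex"
  sp_gIU :: "nat \<Rightarrow> nat \<Rightarrow> complex"
  sp_hUM :: "nat \<Rightarrow> complex"
  sp_hUI :: "nat \<Rightarrow> nat \<Rightarrow> complex"
  sp_hIM :: "nat \<Rightarrow> complex"

definition valid_params :: "sysparams \<Rightarrow> bool" where
  "valid_params S \<longleftrightarrow>
     sp_T S > 0 \<and> sp_sigma2 S > 0 \<and> sp_zeta S > 0 \<and> sp_Ccpu S > 0 \<and> sp_delta S > 0 \<and>
     (\<forall>k\<in>{1..sp_K S}. sp_eps S k > 0 \<and> sp_Pc S k > 0 \<and> sp_pc S k > 0 \<and>
        sp_a S k > 0 \<and> sp_b S k > 0 \<and> sp_c S k > 0 \<and> sp_Q S k \<ge> 0 \<and> sp_gmin S k > 0)"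

text \<open>Optimization variables. The reflection coefficient of element n is cis (theta n),
  so the unit-modulus constraint is built in.\<close>

record decvars =
  v_tb :: "nat \<Rightarrow> real"
  v_to :: "nat \<Rightarrow> real"
  v_rho :: "nat \<Rightarrow> real"
  v_P0 :: real
  v_p :: "nat \<Rightarrow> real"
  v_tau :: "nat \<Rightarrow> real"
  v_f :: "nat \<Rightarrow> real"
  v_theta :: "nat \<Rightarrow> real"

definition chan_g :: "sysparams \<Rightarrow> decvars \<Rightarrow> nat \<Rightarrow> complex" where
  "chan_g S v k = sp_gPU S k +
     (\<Sum>n\<in>{1..sp_N S}. cnj (sp_gPI S n) * cis (v_theta v n) * sp_gIU S k n)"

definition chan_h :: "sysparams \<Rightarrow> decvars \<Rightarrow> nat \<Rightarrow> complex" where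
  "chan_h S v k = sp_hUM S k +
     (\<Sum>n\<in>{1..sp_N S}. cnj (sp_hUI S k n) * cis (v_theta v n) * sp_hIM S n)"

definition Gamma_b :: "sysparams \<Rightarrow> decvars \<Rightarrow> nat \<Rightarrow> real" where
  "Gamma_b S v k = v_tb v k * log 2 (1 + sp_zeta S * v_rho v k * v_P0 v
       * (cmod (chan_h S v k))^2 * (cmod (chan_g S v k))^2 / sp_sigma2 S)"

definition Gamma_o :: "sysparams \<Rightarrow> decvars \<Rightarrow> nat \<Rightarrow> real" where
  "Gamma_o S v k = v_to v k * log 2 (1 + v_p v k * (cmod (chan_h S v k))^2 / sp_sigma2 S)"

definition Gamma_loc :: "sysparams \<Rightarrow> decvars \<Rightarrow> nat \<Rightarrow> real" where
  "Gamma_loc S v k = v_tau v k * v_f v k / sp_Ccpu S"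

definition R_sum :: "sysparams \<Rightarrow> decvars \<Rightarrow> real" where
  "R_sum S v = (\<Sum>k\<in>{1..sp_K S}. Gamma_b S v k + Gamma_o S v k + Gamma_loc S v k)"

definition E1 :: "sysparams \<Rightarrow> decvars \<Rightarrow> nat \<Rightarrow> real" where
  "E1 S v k = sp_Pc S k * v_tb v k"

definition E2 :: "sysparams \<Rightarrow> decvars \<Rightarrow> nat \<Rightarrow> real" where
  "E2 S v k = v_p v k / sp_delta S * v_to v k + sp_pc S k * v_to v k
              + sp_eps S k * (v_f v k)^3 * v_tau v k"

definition E_total :: "sysparams \<Rightarrow> decvars \<Rightarrow> real" where
  "E_total S v = (\<Sum>k\<in>{1..sp_K S}. E1 S v k + E2 S v k)"

definition E_b :: "sysparams \<Rightarrow> decvars \<Rightarrow> nat \<Rightarrow> real" where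
  "E_b S v k =
     ((sp_a S k * (1 - v_rho v k) * v_P0 v * (cmod (chan_g S v k))^2 + sp_b S k)
        / ((1 - v_rho v k) * v_P0 v * (cmod (chan_g S v k))^2 + sp_c S k)
      - sp_b S k / sp_c S k) * v_tb v k"

definition P_b :: "sysparams \<Rightarrow> decvars \<Rightarrow> nat \<Rightarrow> real" where
  "P_b S v k =
     (sp_a S k * v_P0 v * (cmod (chan_g S v k))^2 + sp_b S k)
        / (v_P0 v * (cmod (chan_g S v k))^2 + sp_c S k)
      - sp_b S k / sp_c S k"

definition E_t :: "sysparams \<Rightarrow> decvars \<Rightarrow> nat \<Rightarrow> real" where
  "E_t S v k = E_b S v k + (\<Sum>i\<in>{1..sp_K S} - {k}. P_b S v k * v_tb v i)"

definition eta_EE :: "sysparams \<Rightarrow> decvars \<Rightarrow> real" where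
  "eta_EE S v = R_sum S v / E_total S v"

definition feasible :: "sysparams \<Rightarrow> decvars \<Rightarrow> bool" where
  "feasible S v \<longleftrightarrow>
     (\<forall>k\<in>{1..sp_K S}.
        Gamma_b S v k + Gamma_o S v k + Gamma_loc S v k \<ge> sp_gmin S k \<and>
        E1 S v k + E2 S v k \<le> E_t S v k + sp_Q S k \<and>
        0 \<le> v_tau v k \<and> v_tau v k \<le> sp_T S \<and>
        0 \<le> v_f v k \<and> v_f v k \<le> sp_fmax S \<and>
        0 \<le> v_rho v k \<and> v_rho v k \<le> 1 \<and>
        0 \<le> v_p v k \<and> 0 \<le> v_tb v k \<and> 0 \<le> v_to v k) \<and>
     (\<Sum>k\<in>{1..sp_K S}. v_tb v k + v_to v k) \<le> sp_T S \<and>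
     0 \<le> v_P0 v \<and> v_P0 v \<le> sp_Pmax S"

definition optimal :: "sysparams \<Rightarrow> decvars \<Rightarrow> bool" where
  "optimal S v \<longleftrightarrow> feasible S v \<and> (\<forall>w. feasible S w \<longrightarrow> eta_EE S w \<le> eta_EE S v)"

end

theory Submission
  imports Defs
begin

definition wmod :: "sysparams \<Rightarrow> decvars \<Rightarrow> decvars" where
  "wmod S v = v\<lparr> v_tau := (\<lambda>k. sp_T S), v_f := (\<lambda>k. v_f v k * v_tau v k / sp_T S) \<rparr>"

lemma cube_le:
  fixes f t T e :: real
  assumes "T > 0" "0 \<le> t" "t \<le> T" "0 \<le> f" "0 \<le> e"
  shows "e * (f * t / T)^3 * T \<le> e * f^3 * t"
proof -
  have "(f * t / T)^3 * T = f^3 * t * ((t/T)^2)"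
    using assms by (simp add: field_simps power2_eq_square power3_eq_cube)
  also have "\<dots> \<le> f^3 * t * 1"
  proof (rule mult_left_mono)
    show "(t/T)^2 \<le> 1" using assms by (simp add: power_le_one)
    show "0 \<le> f^3 * t" using assms by simp
  qed
  finally show ?thesis using assms by (simp add: mult.assoc mult_left_mono)
qed

lemma wmod_props:
  assumes vp: "valid_params S" and fv: "feasible S v"
  shows "feasible S (wmod S v)" "\<forall>k\<in>{1..sp_K S}. v_tau (wmod S v) k = sp_T S"
        "eta_EE S v \<le> eta_EE S (wmod S v)"
proof -
  let ?w = "wmod S v"
  have T: "sp_T S > 0" using vp by (simp add: valid_params_def)
  have cg: "chan_g S ?w = chan_g S v" and ch: "chan_h S ?w = chan_h S v"
    by (auto simp: chan_g_def chan_h_def wmod_def)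
  have Gb: "Gamma_b S ?w k = Gamma_b S v k" for k
    by (simp add: Gamma_b_def cg ch) (simp add: wmod_def)
  have Go: "Gamma_o S ?w k = Gamma_o S v k" for k
    by (simp add: Gamma_o_def ch) (simp add: wmod_def)
  have Gl: "Gamma_loc S ?w k = Gamma_loc S v k" for k
    using T by (simp add: Gamma_loc_def wmod_def)
  have E1e: "E1 S ?w k = E1 S v k" for k by (simp add: E1_def wmod_def)
  have Ete: "E_t S ?w k = E_t S v k" for k
    by (simp add: E_t_def E_b_def P_b_def cg) (simp add: wmod_def)
  have kp: "sp_eps S k > 0 \<and> sp_Pc S k > 0 \<and> sp_pc S k > 0 \<and> sp_gmin S k > 0"
    if "k \<in> {1..sp_K S}" for k using vp that by (simp add: valid_params_def)
  have fk: "Gamma_b S v k + Gamma_o S v k + Gamma_loc S v k \<ge> sp_gmin S k \<and>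
        E1 S v k + E2 S v k \<le> E_t S v k + sp_Q S k \<and>
        0 \<le> v_tau v k \<and> v_tau v k \<le> sp_T S \<and>
        0 \<le> v_f v k \<and> v_f v k \<le> sp_fmax S \<and>
        0 \<le> v_rho v k \<and> v_rho v k \<le> 1 \<and>
        0 \<le> v_p v k \<and> 0 \<le> v_tb v k \<and> 0 \<le> v_to v k" if "k \<in> {1..sp_K S}" for k
    using fv that unfolding feasible_def by blast
  have E2le: "E2 S ?w k \<le> E2 S v k" if "k \<in> {1..sp_K S}" for k
  proof -
    have "sp_eps S k * (v_f v k * v_tau v k / sp_T S)^3 * sp_T S \<le> sp_eps S k * (v_f v k)^3 * v_tau v k"
      using cube_le[OF T] fk[OF that] kp[OF that] by simp
    thus ?thesis by (simp add: E2_def wmod_def)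
  qed
  have fle: "v_f ?w k \<le> v_f v k" "0 \<le> v_f ?w k" if "k \<in> {1..sp_K S}" for k
  proof -
    have "v_f v k * v_tau v k / sp_T S \<le> v_f v k * 1"
      using fk[OF that] T by (simp add: divide_le_eq mult_left_mono)
    thus "v_f ?w k \<le> v_f v k" by (simp add: wmod_def)
    show "0 \<le> v_f ?w k" using fk[OF that] T by (simp add: wmod_def)
  qed
  show "feasible S ?w"
    unfolding feasible_def
  proof (intro conjI ballI)
    fix k assume k: "k \<in> {1..sp_K S}"
    show "Gamma_b S ?w k + Gamma_o S ?w k + Gamma_loc S ?w k \<ge> sp_gmin S k"
      using fk[OF k] Gb Go Gl by simp
    show "E1 S ?w k + E2 S ?w k \<le> E_t S ?w k + sp_Q S k"
      using fk[OF k] E1e Ete E2le[OF k] by smt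
    show "0 \<le> v_tau ?w k" "v_tau ?w k \<le> sp_T S" using T by (auto simp: wmod_def)
    show "0 \<le> v_f ?w k" by (rule fle(2)[OF k])
    show "v_f ?w k \<le> sp_fmax S" using fle(1)[OF k] fk[OF k] by simp
    show "0 \<le> v_rho ?w k" "v_rho ?w k \<le> 1" "0 \<le> v_p ?w k" "0 \<le> v_tb ?w k" "0 \<le> v_to ?w k"
      using fk[OF k] by (auto simp: wmod_def)
  next
    show "(\<Sum>k\<in>{1..sp_K S}. v_tb ?w k + v_to ?w k) \<le> sp_T S"
      using fv by (simp add: feasible_def wmod_def)
    show "0 \<le> v_P0 ?w" "v_P0 ?w \<le> sp_Pmax S"
      using fv by (auto simp: feasible_def wmod_def)
  qed
  show "\<forall>k\<in>{1..sp_K S}. v_tau ?w k = sp_T S" by (simp add: wmod_def)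
  have Req: "R_sum S ?w = R_sum S v" by (simp add: R_sum_def Gb Go Gl)
  have Ele: "E_total S ?w \<le> E_total S v"
    unfolding E_total_def by (rule sum_mono) (use E1e E2le in auto)
  have Rnn: "R_sum S v \<ge> 0"
    unfolding R_sum_def
  proof (rule sum_nonneg)
    fix k assume k: "k \<in> {1..sp_K S}"
    show "0 \<le> Gamma_b S v k + Gamma_o S v k + Gamma_loc S v k"
      using fk[OF k] kp[OF k] by linarith
  qed
  show "eta_EE S v \<le> eta_EE S ?w"
  proof (cases "sp_K S = 0")
    case True thus ?thesis by (simp add: eta_EE_def R_sum_def)
  next
    case False
    have pos: "E1 S ?w k + E2 S ?w k > 0" if k: "k \<in> {1..sp_K S}" for k
    proof -
      have tb: "0 \<le> v_tb v k" and to: "0 \<le> v_to v k" and p: "0 \<le> v_p v k"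
        using fk[OF k] by auto
      have d: "sp_delta S > 0" using vp by (simp add: valid_params_def)
      have a1: "0 \<le> sp_Pc S k * v_tb v k" using kp[OF k] tb by simp
      have a2: "0 \<le> v_p v k / sp_delta S * v_to v k" using p d to by simp
      have a3: "0 \<le> sp_pc S k * v_to v k" using kp[OF k] to by simp
      have a4: "0 \<le> sp_eps S k * (v_f ?w k)^3 * sp_T S" using kp[OF k] fle(2)[OF k] T by simp
      have E: "E1 S ?w k + E2 S ?w k = sp_Pc S k * v_tb v k + v_p v k / sp_delta S * v_to v k
          + sp_pc S k * v_to v k + sp_eps S k * (v_f ?w k)^3 * sp_T S"
        by (simp add: E1_def E2_def wmod_def)
      show ?thesis
      proof (rule ccontr)
        assume "\<not> ?thesis"
        hence z: "sp_Pc S k * v_tb v k = 0" "sp_pc S k * v_to v k = 0"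
            "sp_eps S k * (v_f ?w k)^3 * sp_T S = 0"
          using E a1 a2 a3 a4 by linarith+
        hence "v_tb v k = 0" "v_to v k = 0" "v_f ?w k = 0" using kp[OF k] T by auto
        hence "v_f v k * v_tau v k = 0" using T by (simp add: wmod_def)
        hence "Gamma_loc S v k = 0" by (auto simp: Gamma_loc_def)
        moreover have "Gamma_b S v k = 0" "Gamma_o S v k = 0"
          using \<open>v_tb v k = 0\<close> \<open>v_to v k = 0\<close> by (simp_all add: Gamma_b_def Gamma_o_def)
        ultimately show False using fk[OF k] kp[OF k] by simp
      qed
    qed
    have Epos: "E_total S ?w > 0"
      unfolding E_total_def
      by (rule sum_pos) (use False pos in auto)
    have "R_sum S v / E_total S v \<le> R_sum S v / E_total S ?w"
      by (rule divide_left_mono[OF Ele Rnn]) (use Epos Ele in auto)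
    thus ?thesis by (simp add: eta_EE_def Req)
  qed
qed

theorem proposition1:
  assumes "valid_params S"
  shows "(\<forall>v. feasible S v \<longrightarrow>
            (\<exists>w. feasible S w \<and> (\<forall>k\<in>{1..sp_K S}. v_tau w k = sp_T S) \<and>
                 eta_EE S v \<le> eta_EE S w)) \<and>
         ((\<exists>v. optimal S v) \<longrightarrow>
            (\<exists>w. optimal S w \<and> (\<forall>k\<in>{1..sp_K S}. v_tau w k = sp_T S)))"
proof (intro conjI allI impI)
  fix v assume "feasible S v"
  thus "\<exists>w. feasible S w \<and> (\<forall>k\<in>{1..sp_K S}. v_tau w k = sp_T S) \<and> eta_EE S v \<le> eta_EE S w"
    using wmod_props[OF assms] by blast
next
  assume "\<exists>v. optimal S v"
  then obtain v where o: "optimal S v" by blast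
  hence fv: "feasible S v" by (simp add: optimal_def)
  note W = wmod_props[OF assms fv]
  have "optimal S (wmod S v)"
    unfolding optimal_def using W o unfolding optimal_def by force
  thus "\<exists>w. optimal S w \<and> (\<forall>k\<in>{1..sp_K S}. v_tau w k = sp_T S)" using W by blast
qed

end
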